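(* Let $G=(V,E)$ be an undirected graph with $V=\{v_1,\ldots,v_n\}$, $n\geq 3$, and let $r,g,b$ be three distinct constants. For $1\leq i<j\leq n$ let $r_{ij}=\{(x,y)\in\{r,g,b\}^2 : x\neq y\}$ if $\{v_i,v_j\}\in E$ and $r_{ij}=\{r,g,b\}^2$ otherwise. Let $\rho$ be the constraint with scope $(X_1,\ldots,X_n)$ whose relation contains, for each pair $i<j$ and each $(x,y)\in r_{ij}$, exactly one tuple $t$ with $t[X_i]=x$, $t[X_j]=y$ and $t[X_\ell]=d_t$ for all $\ell\notin\{i,j\}$, where the constants $d_t$ are pairwise distinct, distinct from $r,g,b$, and each $d_t$ occurs only in the tuple $t$ (and nothing else is in the relation). Then $sol(\Pi_{S_2}(\rho))\neq\rho$ if and only if $G$ is 3-colorable.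
   Context: For a constraint $\rho$ and a set $W$ of its variables, $\Pi_W(\rho)$ is the projection of $\rho$ onto $W$. $S_2$ is the set of all nonempty subsets of the variables of $\rho$ of size at most $2$, and $\Pi_{S_2}(\rho)$ is the constraint network over the variables of $\rho$ with constraints $\Pi_W(\rho)$ for $W\in S_2$. For a network $N$, $sol(N)$ is the set of assignments to all variables whose restriction to every constraint scope lies in the corresponding relation (the natural join of the relations). A graph is 3-colorable if there is a map $V\to\{r,g,b\}$ assigning distinct colors to the endpoints of every edge. *)

theory Defs
  imports Main
begin

(* Variables X_1..X_n are indexed 0..<n; a tuple / assignment is a list of length n. *)

definition proj :: "nat set \<Rightarrow> 'v list \<Rightarrow> (nat \<Rightarrow> 'v option)" where
  "proj W t = (\<lambda>l. if l \<in> W then Some (t ! l) else None)"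

definition Proj :: "nat set \<Rightarrow> 'v list set \<Rightarrow> (nat \<Rightarrow> 'v option) set" where
  "Proj W \<rho> = proj W ` \<rho>"

definition S2 :: "nat \<Rightarrow> nat set set" where
  "S2 n = {W. W \<subseteq> {0..<n} \<and> W \<noteq> {} \<and> card W \<le> 2}"

definition Pi_S2 :: "nat \<Rightarrow> 'v list set \<Rightarrow> (nat set \<times> (nat \<Rightarrow> 'v option) set) set" where
  "Pi_S2 n \<rho> = {(W, Proj W \<rho>) | W. W \<in> S2 n}"

definition sol :: "nat \<Rightarrow> (nat set \<times> (nat \<Rightarrow> 'v option) set) set \<Rightarrow> 'v list set" where
  "sol n N = {s. length s = n \<and> (\<forall>(W, R) \<in> N. proj W s \<in> R)}"

definition graph_on :: "nat \<Rightarrow> nat set set \<Rightarrow> bool" where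
  "graph_on n E \<longleftrightarrow> (\<forall>e\<in>E. \<exists>u w. u < n \<and> w < n \<and> u \<noteq> w \<and> e = {u, w})"

datatype colour = Red | Green | Blue

definition three_colorable :: "nat \<Rightarrow> nat set set \<Rightarrow> bool" where
  "three_colorable n E \<longleftrightarrow>
     (\<exists>c :: nat \<Rightarrow> colour. \<forall>u<n. \<forall>w<n. {u, w} \<in> E \<longrightarrow> c u \<noteq> c w)"

definition rel_ij :: "nat set set \<Rightarrow> 'v \<Rightarrow> 'v \<Rightarrow> 'v \<Rightarrow> nat \<Rightarrow> nat \<Rightarrow> ('v \<times> 'v) set" where
  "rel_ij E r g b i j =
     (if {i, j} \<in> E then {(x, y). x \<in> {r, g, b} \<and> y \<in> {r, g, b} \<and> x \<noteq> y}
      else {r, g, b} \<times> {r, g, b})"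

(* the constraint rho; d i j x y is the fresh constant d_t for the tuple t given by (i,j,x,y) *)
definition rho :: "nat \<Rightarrow> nat set set \<Rightarrow> 'v \<Rightarrow> 'v \<Rightarrow> 'v \<Rightarrow>
                   (nat \<Rightarrow> nat \<Rightarrow> 'v \<Rightarrow> 'v \<Rightarrow> 'v) \<Rightarrow> 'v list set" where
  "rho n E r g b d =
     {map (\<lambda>l. if l = i then x else if l = j then y else d i j x y) [0..<n] | i j x y.
        i < j \<and> j < n \<and> (x, y) \<in> rel_ij E r g b i j}"

end

theory Submission
  imports Defs
begin

definition tup :: "nat \<Rightarrow> (nat \<Rightarrow> nat \<Rightarrow> 'v \<Rightarrow> 'v \<Rightarrow> 'v) \<Rightarrow> nat \<Rightarrow> nat \<Rightarrow> 'v \<Rightarrow> 'v \<Rightarrow> 'v list" where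
  "tup n d i j x y = map (\<lambda>l. if l = i then x else if l = j then y else d i j x y) [0..<n]"

lemma rho_eq: "rho n E r g b d = {tup n d i j x y | i j x y. i < j \<and> j < n \<and> (x, y) \<in> rel_ij E r g b i j}"
  by (simp add: rho_def tup_def)

lemma tup_len[simp]: "length (tup n d i j x y) = n" by (simp add: tup_def)

lemma tup_nth: "l < n \<Longrightarrow> tup n d i j x y ! l = (if l = i then x else if l = j then y else d i j x y)"
  by (simp add: tup_def)

lemma rel_in: "(x, y) \<in> rel_ij E r g b i j \<Longrightarrow> x \<in> {r, g, b} \<and> y \<in> {r, g, b}"
  by (auto simp: rel_ij_def split: if_splits)

lemma proj_eq: "proj W s = proj W t \<longleftrightarrow> (\<forall>l\<in>W. s ! l = t ! l)"
  by (auto simp: proj_def fun_eq_iff split: if_splits)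

lemma sol_iff: "s \<in> sol n (Pi_S2 n R) \<longleftrightarrow> length s = n \<and>
   (\<forall>W. W \<subseteq> {0..<n} \<and> W \<noteq> {} \<and> card W \<le> 2 \<longrightarrow> (\<exists>t\<in>R. \<forall>l\<in>W. s ! l = t ! l))"
proof -
  have a: "(\<forall>(W, Q)\<in>Pi_S2 n R. proj W s \<in> Q) \<longleftrightarrow> (\<forall>W\<in>S2 n. proj W s \<in> proj W ` R)"
    unfolding Pi_S2_def Proj_def by blast
  have b: "proj W s \<in> proj W ` R \<longleftrightarrow> (\<exists>t\<in>R. \<forall>l\<in>W. s ! l = t ! l)" for W
    unfolding image_iff proj_eq by blast
  show ?thesis unfolding sol_def mem_Collect_eq a b S2_def by blast
qed

lemma W_pair:
  fixes W :: "nat set" and n :: nat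
  assumes "W \<subseteq> {0..<n}" "W \<noteq> {}" "card W \<le> 2" "n \<ge> 2"
  shows "\<exists>k l. k < n \<and> l < n \<and> k \<noteq> l \<and> W \<subseteq> {k, l}"
proof -
  have fin: "finite W" using assms(1) finite_subset by blast
  obtain k where k: "k \<in> W" using assms(2) by blast
  have kn: "k < n" using k assms(1) by auto
  show ?thesis
  proof (cases "W - {k} = {}")
    case True
    obtain l :: nat where l: "l < n" "l \<noteq> k"
    proof (cases "k = 0")
      case True then show ?thesis using that[of 1] assms(4) by simp
    next
      case False then show ?thesis using that[of 0] assms(4) by simp
    qed
    have "W \<subseteq> {k, l}" using True by blast
    then show ?thesis using kn l by blast
  next
    case False
    then obtain l where l: "l \<in> W" "l \<noteq> k" by blast
    have ln: "l < n" using l assms(1) by auto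
    have "W \<subseteq> {k, l}"
    proof
      fix m assume m: "m \<in> W"
      show "m \<in> {k, l}"
      proof (rule ccontr)
        assume mm: "m \<notin> {k, l}"
        hence "card {k, l, m} = 3" using l by simp
        moreover have "{k, l, m} \<subseteq> W" using k l m by simp
        ultimately have "card W \<ge> 3" using card_mono[OF fin] by metis
        thus False using assms(3) by simp
      qed
    qed
    thus ?thesis using kn ln l by blast
  qed
qed

theorem mainTheorem9:
  fixes n :: nat and E :: "nat set set" and r g b :: 'v
    and d :: "nat \<Rightarrow> nat \<Rightarrow> 'v \<Rightarrow> 'v \<Rightarrow> 'v"
  assumes "n \<ge> 3"
    and "graph_on n E"
    and "r \<noteq> g" and "r \<noteq> b" and "g \<noteq> b"
    and "\<And>i j x y i' j' x' y'. i < j \<Longrightarrow> j < n \<Longrightarrow> (x, y) \<in> rel_ij E r g b i j \<Longrightarrow>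
           i' < j' \<Longrightarrow> j' < n \<Longrightarrow> (x', y') \<in> rel_ij E r g b i' j' \<Longrightarrow>
           d i j x y = d i' j' x' y' \<Longrightarrow> (i, j, x, y) = (i', j', x', y')"
    and "\<And>i j x y. i < j \<Longrightarrow> j < n \<Longrightarrow> (x, y) \<in> rel_ij E r g b i j \<Longrightarrow>
           d i j x y \<notin> {r, g, b}"
  shows "sol n (Pi_S2 n (rho n E r g b d)) \<noteq> rho n E r g b d \<longleftrightarrow> three_colorable n E"
proof -
  note rgb = assms(3,4,5)
  note dinj = assms(6)
  note dout = assms(7)
  let ?R = "rho n E r g b d"
  have memR: "t \<in> ?R \<longleftrightarrow> (\<exists>i j x y. i < j \<and> j < n \<and> (x, y) \<in> rel_ij E r g b i j \<and> t = tup n d i j x y)" for t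
    by (auto simp add: rho_eq)
  have sub: "?R \<subseteq> sol n (Pi_S2 n ?R)"
  proof
    fix t assume t: "t \<in> ?R"
    then have "length t = n" using memR by auto
    with t show "t \<in> sol n (Pi_S2 n ?R)" by (auto simp: sol_iff)
  qed
  have neq: "sol n (Pi_S2 n ?R) \<noteq> ?R \<longleftrightarrow> (\<exists>s \<in> sol n (Pi_S2 n ?R). s \<notin> ?R)"
    using sub by blast
  show ?thesis
  proof
    assume "sol n (Pi_S2 n ?R) \<noteq> ?R"
    then obtain s where s: "s \<in> sol n (Pi_S2 n ?R)" and sn: "s \<notin> ?R" using neq by blast
    have len: "length s = n" using s by (simp add: sol_iff)
    have W: "\<And>W. W \<subseteq> {0..<n} \<Longrightarrow> W \<noteq> {} \<Longrightarrow> card W \<le> 2 \<Longrightarrow> \<exists>t\<in>?R. \<forall>l\<in>W. s ! l = t ! l"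
      using s by (simp add: sol_iff)
    have pair: "\<exists>t\<in>?R. s ! k = t ! k \<and> s ! l = t ! l" if "k < n" "l < n" for k l
    proof -
      have "card {k, l} \<le> 2" by (simp add: card_insert_if)
      then show ?thesis using W[of "{k,l}"] that by auto
    qed
    have A: "s ! k \<in> {r, g, b}" if k: "k < n" for k
    proof (rule ccontr)
      assume nk: "s ! k \<notin> {r, g, b}"
      obtain t where t: "t \<in> ?R" "s ! k = t ! k" using pair[OF k k] by blast
      then obtain i j x y where ij: "i < j" "j < n" "(x, y) \<in> rel_ij E r g b i j" and tt: "t = tup n d i j x y"
        using memR by blast
      have xy: "x \<in> {r,g,b}" "y \<in> {r,g,b}" using rel_in[OF ij(3)] by auto
      have sk: "s ! k = d i j x y" and ki: "k \<noteq> i" "k \<noteq> j"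
        using t(2) tt k nk xy by (auto simp: tup_nth split: if_splits)
      have "s = t"
      proof (rule nth_equalityI)
        show "length s = length t" using len tt by simp
        fix l assume "l < length s"
        hence l: "l < n" using len by simp
        obtain t' where t': "t' \<in> ?R" "s ! k = t' ! k" "s ! l = t' ! l" using pair[OF k l] by blast
        then obtain i' j' x' y' where ij': "i' < j'" "j' < n" "(x', y') \<in> rel_ij E r g b i' j'"
          and tt': "t' = tup n d i' j' x' y'" using memR by blast
        have xy': "x' \<in> {r,g,b}" "y' \<in> {r,g,b}" using rel_in[OF ij'(3)] by auto
        have "t' ! k = d i' j' x' y'"
          using t'(2) tt' k nk xy' by (auto simp: tup_nth split: if_splits)
        hence "d i j x y = d i' j' x' y'" using sk t'(2) by simp
        hence "(i, j, x, y) = (i', j', x', y')" by (rule dinj[OF ij ij'])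
        hence "t' = t" using tt tt' by simp
        thus "s ! l = t ! l" using t'(3) by simp
      qed
      thus False using sn t(1) by simp
    qed
    define c where "c = (\<lambda>k. if s ! k = r then Red else if s ! k = g then Green else Blue)"
    show "three_colorable n E"
      unfolding three_colorable_def
    proof (intro exI[of _ c] allI impI)
      fix u w assume u: "u < n" and w: "w < n" and e: "{u, w} \<in> E"
      have uw: "u \<noteq> w"
      proof
        assume "u = w"
        with e assms(2) obtain a a' where "a \<noteq> a'" "{u} = {a, a'}"
          unfolding graph_on_def by fastforce
        thus False by (metis doubleton_eq_iff insert_absorb2)
      qed
      obtain t where t: "t \<in> ?R" "s ! u = t ! u" "s ! w = t ! w" using pair[OF u w] by blast
      then obtain i j x y where ij: "i < j" "j < n" "(x, y) \<in> rel_ij E r g b i j" and tt: "t = tup n d i j x y"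
        using memR by blast
      have dn: "d i j x y \<notin> {r,g,b}" using dout[OF ij] .
      have ui: "u = i \<or> u = j" using A[OF u] t(2) tt u dn by (auto simp: tup_nth split: if_splits)
      have wi: "w = i \<or> w = j" using A[OF w] t(3) tt w dn by (auto simp: tup_nth split: if_splits)
      have ij_eq: "{i, j} = {u, w}" using ui wi uw by auto
      hence "{i, j} \<in> E" using e by simp
      hence "x \<noteq> y" using ij(3) by (simp add: rel_ij_def)
      hence "s ! u \<noteq> s ! w" using t(2,3) tt u w ui wi uw ij(1) by (auto simp: tup_nth)
      thus "c u \<noteq> c w" using A[OF u] A[OF w] rgb unfolding c_def by auto
    qed
  next
    assume "three_colorable n E"
    then obtain c :: "nat \<Rightarrow> colour" where c: "\<And>u w. u < n \<Longrightarrow> w < n \<Longrightarrow> {u, w} \<in> E \<Longrightarrow> c u \<noteq> c w"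
      unfolding three_colorable_def by blast
    define col where "col = (\<lambda>k. case c k of Red \<Rightarrow> r | Green \<Rightarrow> g | Blue \<Rightarrow> b)"
    have colin: "col k \<in> {r, g, b}" for k by (cases "c k") (auto simp: col_def)
    have colne: "c u \<noteq> c w \<Longrightarrow> col u \<noteq> col w" for u w
      using rgb by (cases "c u"; cases "c w") (auto simp: col_def)
    define s where "s = map col [0..<n]"
    have snth: "k < n \<Longrightarrow> s ! k = col k" for k by (simp add: s_def)
    have pairt: "\<exists>t\<in>?R. t ! k = col k \<and> t ! l = col l" if "k < l" "l < n" for k l
    proof -
      have "(col k, col l) \<in> rel_ij E r g b k l"
        using colin c[of k l] colne that by (auto simp: rel_ij_def)
      then show ?thesis using that memR
        by (intro bexI[of _ "tup n d k l (col k) (col l)"]) (auto simp: tup_nth)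
    qed
    have "s \<in> sol n (Pi_S2 n ?R)"
      unfolding sol_iff
    proof (intro conjI allI impI)
      show "length s = n" by (simp add: s_def)
      fix W :: "nat set" assume "W \<subseteq> {0..<n} \<and> W \<noteq> {} \<and> card W \<le> 2"
      then obtain k l where kl: "k < n" "l < n" "k \<noteq> l" "W \<subseteq> {k, l}"
        using W_pair[of W n] assms(1) by auto
      have "\<exists>t\<in>?R. t ! k = col k \<and> t ! l = col l"
      proof (cases "k < l")
        case True then show ?thesis using pairt kl by blast
      next
        case False then have "l < k" using kl by simp
        then show ?thesis using pairt[of l k] kl by blast
      qed
      then obtain t where t: "t \<in> ?R" "t ! k = col k" "t ! l = col l" by blast
      have "\<forall>m\<in>W. s ! m = t ! m"
      proof
        fix m assume "m \<in> W"
        hence "m = k \<or> m = l" using kl(4) by blast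
        thus "s ! m = t ! m" using t kl snth by auto
      qed
      then show "\<exists>t\<in>?R. \<forall>l\<in>W. s ! l = t ! l" using t(1) by blast
    qed
    moreover have "s \<notin> ?R"
    proof
      assume "s \<in> ?R"
      then obtain i j x y where ij: "i < j" "j < n" "(x, y) \<in> rel_ij E r g b i j" and tt: "s = tup n d i j x y"
        using memR by blast
      have "\<exists>m\<in>{0::nat,1,2}. m \<noteq> i \<and> m \<noteq> j" by auto
      then obtain m where m0: "m \<in> {0::nat,1,2}" "m \<noteq> i" "m \<noteq> j" by blast
      have m: "m < n" "m \<noteq> i" "m \<noteq> j" using m0 assms(1) by auto
      have "s ! m = d i j x y" using tt m by (simp add: tup_nth)
      thus False using snth[OF m(1)] colin[of m] dout[OF ij] by simp
    qed
    ultimately show "sol n (Pi_S2 n ?R) \<noteq> ?R" using neq by blast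
  qed
qed

end
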